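(* For positive integers $r,m$ let \[J_{r,m}=\{(j_1,\dots,j_r)\in\mathbb{Z}^r:\ 1\le j_1<\dots<j_r\le m,\ j_k\le j_{k+1}-2\ \text{for all } k=1,\dots,r-1\}.\] Then \[\sum_{(j_1,\dots,j_r)\in J_{r,m}}\ \prod_{k=1}^{r}j_{r-k+1}=\frac{(m+1)_{2r}}{2^r\,r!},\] where $(x)_t=x(x-1)\cdots(x-t+1)$ is the falling factorial. *)

theory Defs
  imports Complex_Main
begin

definition falling_fact :: "int \<Rightarrow> nat \<Rightarrow> int" where
  "falling_fact x t = (\<Prod>i<t. x - int i)"

text \<open>J_{r,m}: tuples (j_1,...,j_r) (as lists, index k-1 for j_k) with
  1 \<le> j_1, j_r \<le> m, and j_k \<le> j_{k+1} - 2 (which implies strict increase).\<close>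
definition J_set :: "nat \<Rightarrow> nat \<Rightarrow> int list set" where
  "J_set r m = {js. length js = r \<and> (\<forall>k<r. 1 \<le> js ! k \<and> js ! k \<le> int m)
      \<and> (\<forall>k. k + 1 < r \<longrightarrow> js ! k < js ! (k+1) \<and> js ! k \<le> js ! (k+1) - 2)}"

end

theory Submission
  imports Defs
begin

definition Q :: "int list \<Rightarrow> int" where "Q js = (\<Prod>i<length js. js ! i)"

lemma Q_snoc: "Q (ys @ [x]) = Q ys * x"
proof -
  have "(\<Prod>i<length ys. (ys @ [x]) ! i) = (\<Prod>i<length ys. ys ! i)"
    by (rule prod.cong) (auto simp: nth_append)
  thus ?thesis unfolding Q_def by (simp add: prod.lessThan_Suc)
qed

lemma reidx: "(\<Prod>k\<in>{1..r}. (g (r - k)::real)) = (\<Prod>i<r. g i)" for r :: nat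
  by (rule prod.reindex_bij_witness[where i="\<lambda>i. r - i" and j="\<lambda>k. r - k"]) auto
lemma J_finite: "finite (J_set r m)"
proof -
  have "J_set r m \<subseteq> {xs. set xs \<subseteq> {1..int m} \<and> length xs = r}"
    unfolding J_set_def by (auto simp: in_set_conv_nth)
  thus ?thesis by (rule finite_subset) (rule finite_lists_length_eq, simp)
qed

lemma J_zero: "J_set 0 m = {[]}"
  unfolding J_set_def by auto

lemma J_Suc_zero: "J_set (Suc r) 0 = {}"
  unfolding J_set_def by fastforce

lemma J_Suc: "J_set (Suc r) (Suc m) = J_set (Suc r) m \<union> (\<lambda>ys. ys @ [int m + 1]) ` J_set r (m - 1)"
proof (rule set_eqI, rule iffI)
  fix js assume js: "js \<in> J_set (Suc r) (Suc m)"
  hence len: "length js = Suc r" and bnd: "\<And>k. k < Suc r \<Longrightarrow> 1 \<le> js ! k \<and> js ! k \<le> int m + 1"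
    and step: "\<And>k. k + 1 < Suc r \<Longrightarrow> js ! k < js ! (k+1) \<and> js ! k \<le> js ! (k+1) - 2"
    unfolding J_set_def by auto
  show "js \<in> J_set (Suc r) m \<union> (\<lambda>ys. ys @ [int m + 1]) ` J_set r (m - 1)"
  proof (cases "js ! r \<le> int m")
    case True
    have "js ! k \<le> int m" if "k < Suc r" for k
    proof (cases "k = r")
      case False
      hence "k + 1 < Suc r" using that by simp
      from step[OF this] bnd[of "k+1"] this show ?thesis by auto
    qed (use True in simp)
    thus ?thesis using js unfolding J_set_def by auto
  next
    case False
    hence last: "js ! r = int m + 1" using bnd[of r] by auto
    define ys where "ys = butlast js"
    have jsys: "js = ys @ [int m + 1]"
      unfolding ys_def using len last
      by (metis append_butlast_last_id diff_Suc_1 last_conv_nth length_greater_0_conv zero_less_Suc)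
    have ylen: "length ys = r" using len ys_def by simp
    have ynth: "ys ! k = js ! k" if "k < r" for k using that jsys ylen by (simp add: nth_append)
    have "ys ! k \<le> int m - 1" if "k < r" for k
    proof (cases "k + 1 = r")
      case True thus ?thesis using step[of k] last ynth that by auto
    next
      case False
      hence "k + 2 < Suc r" using that by simp
      thus ?thesis using step[of k] step[of "k+1"] bnd[of "k+2"] ynth that by auto
    qed
    moreover have "1 \<le> ys ! k" if "k < r" for k using bnd[of k] ynth that by auto
    ultimately have A: "\<forall>k<r. 1 \<le> ys ! k \<and> ys ! k \<le> int (m - 1)"
    proof (intro allI impI)
      fix k assume k: "k < r"
      assume h1: "\<And>k. k < r \<Longrightarrow> ys ! k \<le> int m - 1" and h2: "\<And>k. k < r \<Longrightarrow> 1 \<le> ys ! k"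
      have "1 \<le> ys ! k" "ys ! k \<le> int m - 1" using h1[OF k] h2[OF k] by auto
      moreover hence "m \<ge> 1" by linarith
      ultimately show "1 \<le> ys ! k \<and> ys ! k \<le> int (m - 1)" by (simp add: of_nat_diff)
    qed
    have B: "\<forall>k. k + 1 < r \<longrightarrow> ys ! k < ys ! (k+1) \<and> ys ! k \<le> ys ! (k+1) - 2"
    proof (intro allI impI)
      fix k assume k: "k + 1 < r"
      thus "ys ! k < ys ! (k+1) \<and> ys ! k \<le> ys ! (k+1) - 2"
        using step[of k] ynth[of k] ynth[of "k+1"] by simp
    qed
    have "ys \<in> J_set r (m - 1)"
      unfolding J_set_def using ylen A B by blast
    thus ?thesis using jsys by auto
  qed
next
  fix js assume "js \<in> J_set (Suc r) m \<union> (\<lambda>ys. ys @ [int m + 1]) ` J_set r (m - 1)"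
  thus "js \<in> J_set (Suc r) (Suc m)"
  proof
    assume "js \<in> J_set (Suc r) m" thus ?thesis unfolding J_set_def by force
  next
    assume "js \<in> (\<lambda>ys. ys @ [int m + 1]) ` J_set r (m - 1)"
    then obtain ys where js: "js = ys @ [int m + 1]" and ys: "ys \<in> J_set r (m - 1)" by auto
    have ylen: "length ys = r" and yb: "\<And>k. k < r \<Longrightarrow> 1 \<le> ys ! k \<and> ys ! k \<le> int (m - 1)"
      and ys_step: "\<And>k. k + 1 < r \<Longrightarrow> ys ! k < ys ! (k+1) \<and> ys ! k \<le> ys ! (k+1) - 2"
      using ys unfolding J_set_def by auto
    have A: "\<forall>k<Suc r. 1 \<le> js ! k \<and> js ! k \<le> int (Suc m)"
    proof (intro allI impI)
      fix k assume "k < Suc r"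
      thus "1 \<le> js ! k \<and> js ! k \<le> int (Suc m)"
        using yb[of k] js ylen by (cases "k < r") (auto simp: nth_append)
    qed
    have B: "\<forall>k. k + 1 < Suc r \<longrightarrow> js ! k < js ! (k+1) \<and> js ! k \<le> js ! (k+1) - 2"
    proof (intro allI impI)
      fix k assume k: "k + 1 < Suc r"
      show "js ! k < js ! (k+1) \<and> js ! k \<le> js ! (k+1) - 2"
      proof (cases "k + 1 < r")
        case True thus ?thesis using ys_step[of k] js ylen by (simp add: nth_append)
      next
        case False
        hence "k + 1 = r" using k by simp
        moreover have "m \<ge> 1" using yb[of k] \<open>k+1 = r\<close> by auto
        ultimately show ?thesis using yb[of k] js ylen by (auto simp: nth_append of_nat_diff)
      qed
    qed
    have "length js = Suc r" using js ylen by simp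
    thus ?thesis unfolding J_set_def using A B by blast
  qed
qed

lemma J_disj: "J_set (Suc r) m \<inter> (\<lambda>ys. ys @ [int m + 1]) ` J_set r (m - 1) = {}"
proof -
  have False if "ys @ [int m + 1] \<in> J_set (Suc r) m" "ys \<in> J_set r (m - 1)" for ys
  proof -
    have "length ys = r" using that(2) unfolding J_set_def by simp
    moreover have "(ys @ [int m + 1]) ! r \<le> int m" using that(1) unfolding J_set_def by simp
    ultimately show False by (simp add: nth_append)
  qed
  thus ?thesis by blast
qed

definition S :: "nat \<Rightarrow> nat \<Rightarrow> int" where "S r m = (\<Sum>js\<in>J_set r m. Q js)"

lemma S_Suc: "S (Suc r) (Suc m) = S (Suc r) m + (int m + 1) * S r (m - 1)"
proof -
  have "S (Suc r) (Suc m) = S (Suc r) m + (\<Sum>js\<in>(\<lambda>ys. ys @ [int m + 1]) ` J_set r (m - 1). Q js)"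
    unfolding S_def J_Suc by (rule sum.union_disjoint) (use J_finite J_disj in auto)
  also have "(\<Sum>js\<in>(\<lambda>ys. ys @ [int m + 1]) ` J_set r (m - 1). Q js) = (\<Sum>ys\<in>J_set r (m - 1). Q ys * (int m + 1))"
    by (subst sum.reindex) (auto simp: inj_on_def Q_snoc)
  finally show ?thesis by (simp add: S_def sum_distrib_right[symmetric] mult.commute)
qed

lemma ff_Suc1: "falling_fact x (Suc n) = x * falling_fact (x - 1) n"
  unfolding falling_fact_def by (subst prod.lessThan_Suc_shift) (simp add: algebra_simps)

lemma ff_Suc2: "falling_fact x (Suc n) = falling_fact x n * (x - int n)"
  unfolding falling_fact_def by (simp add: prod.lessThan_Suc)

lemma ff_zero: "0 \<le> x \<Longrightarrow> x < int n \<Longrightarrow> falling_fact x n = 0"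
  unfolding falling_fact_def by (rule prod_zero) (auto intro!: bexI[of _ "nat x"])

lemma main: "2 ^ r * fact r * S r m = falling_fact (int m + 1) (2 * r)"
proof (induction m arbitrary: r rule: less_induct)
  case (less m)
  show ?case
  proof (cases r)
    case 0 thus ?thesis by (simp add: S_def J_zero Q_def falling_fact_def)
  next
    case (Suc r')
    show ?thesis
    proof (cases m)
      case 0
      thus ?thesis using Suc by (simp add: S_def J_Suc_zero ff_zero)
    next
      case (Suc m')
      have IH1: "2 ^ Suc r' * fact (Suc r') * S (Suc r') m' = falling_fact (int m' + 1) (2 * Suc r')"
        using less.IH[of m' "Suc r'"] Suc by simp
      have IH2: "2 ^ r' * fact r' * S r' (m' - 1) = falling_fact (int (m' - 1) + 1) (2 * r')"
        using less.IH[of "m' - 1" r'] Suc by simp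
      have E: "falling_fact (int (m' - 1) + 1) (2 * r') = falling_fact (int m') (2 * r')"
      proof (cases "m' = 0")
        case True show ?thesis
        proof (cases r')
          case 0 thus ?thesis by (simp add: falling_fact_def)
        next
          case (Suc n)
          thus ?thesis using True ff_zero[of 1 "2 * r'"] ff_zero[of 0 "2 * r'"] by simp
        qed
      qed (simp add: of_nat_diff)
      have F1: "falling_fact (int m' + 2) (2 * r' + 2) = (int m' + 2) * ((int m' + 1) * falling_fact (int m') (2*r'))"
        using ff_Suc1[of "int m' + 2" "Suc (2*r')"] ff_Suc1[of "int m' + 1" "2*r'"]
        by (simp add: numeral_eq_Suc algebra_simps)
      have F2: "falling_fact (int m' + 1) (2 * r' + 2) = ((int m' + 1) * falling_fact (int m') (2*r')) * (int m' - 2 * int r')"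
        using ff_Suc2[of "int m' + 1" "Suc (2*r')"] ff_Suc1[of "int m' + 1" "2*r'"]
        by (simp add: numeral_eq_Suc algebra_simps)
      have "2 ^ r * fact r * S r m = 2 ^ Suc r' * fact (Suc r') * S (Suc r') m'
             + 2 * (int r' + 1) * (int m' + 1) * (2 ^ r' * fact r' * S r' (m' - 1))"
        using Suc \<open>r = Suc r'\<close> by (simp add: S_Suc algebra_simps of_nat_mult)
      also have "\<dots> = falling_fact (int m' + 2) (2 * r' + 2)"
        using IH1 IH2 E F1 F2 by (simp add: algebra_simps)
      finally show ?thesis using Suc \<open>r = Suc r'\<close> by (simp add: add.commute)
    qed
  qed
qed

theorem lemma3p4:
  fixes r m :: nat
  assumes "r > 0" and "m > 0"
  shows "(\<Sum>js\<in>J_set r m. \<Prod>k\<in>{1..r}. (real_of_int (js ! (r - k))))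
         = real_of_int (falling_fact (int m + 1) (2*r)) / (2 ^ r * fact r)"
proof -
  have "(\<Sum>js\<in>J_set r m. \<Prod>k\<in>{1..r}. (real_of_int (js ! (r - k)))) = real_of_int (S r m)"
    unfolding S_def of_int_sum
  proof (rule sum.cong[OF refl])
    fix js assume "js \<in> J_set r m"
    hence "length js = r" unfolding J_set_def by auto
    thus "(\<Prod>k\<in>{1..r}. real_of_int (js ! (r - k))) = real_of_int (Q js)"
      unfolding Q_def using reidx[of "\<lambda>i. real_of_int (js ! i)" r] by simp
  qed
  also have "\<dots> = real_of_int (falling_fact (int m + 1) (2*r)) / (2 ^ r * fact r)"
    unfolding main[symmetric] by (simp add: field_simps)
  finally show ?thesis .
qed

end
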